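(* Let $n\ge 2$ be an even integer and let $K$ be a bounded convex body in $\mathbb R^n$ with $C^\infty$ boundary $\partial K$. Suppose that $P(\xi,t)$ and $q(\xi,t)$ are continuous in $\xi\in S^{n-1}$ and polynomials in $t$, with $\deg q(\xi,\cdot)=2$ and $q(\xi,t)>0$ for $t\in I_\xi=\big(h_K^-(\xi),h_K^+(\xi)\big)$, and that either $A_K(\xi,t)=\sqrt{q(\xi,t)}\,P(\xi,t)$ for all $\xi\in S^{n-1}$, $t\in I_\xi$, or $A_K(\xi,t)=P(\xi,t)/\sqrt{q(\xi,t)}$ for all $\xi\in S^{n-1}$, $t\in I_\xi$. Then there is a function $q_0$ on $S^{n-1}$ such that $q(\xi,t)=q_0(\xi)\big(h_K^+(\xi)-t\big)\big(t-h_K^-(\xi)\big)$ for all $\xi \in S^{n-1}$ and $t$.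
   Context: For a bounded domain $K\subset\mathbb R^n$, $A_K(\xi,t)$ denotes the $(n-1)$-dimensional volume of $K\cap\{x\cdot\xi=t\}$, for $\xi\in S^{n-1}$, $t\in\mathbb R$. The support functions are $h_K^+(\xi)=\max_{x\in K}x\cdot\xi$ and $h_K^-(\xi)=\min_{x\in K}x\cdot\xi$. *)

theory Defs
  imports "HOL-Analysis.Analysis" "HOL-Probability.Probability"
    "HOL-Computational_Algebra.Polynomial"
begin

fun Ck_on :: "nat \<Rightarrow> ('a::euclidean_space \<Rightarrow> real) \<Rightarrow> 'a set \<Rightarrow> bool" where
  "Ck_on 0 f U = continuous_on U f"
| "Ck_on (Suc k) f U =
     (\<exists>g. (\<forall>x\<in>U. (f has_derivative (\<lambda>h. g x \<bullet> h)) (at x)) \<and>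
          (\<forall>i\<in>Basis. Ck_on k (\<lambda>x. g x \<bullet> i) U))"

definition smooth_fun_on :: "('a::euclidean_space \<Rightarrow> real) \<Rightarrow> 'a set \<Rightarrow> bool" where
  "smooth_fun_on f U \<longleftrightarrow> (\<forall>k. Ck_on k f U)"

definition smooth_boundary :: "'a::euclidean_space set \<Rightarrow> bool" where
  "smooth_boundary K \<longleftrightarrow>
     (\<forall>x\<in>frontier K. \<exists>U f g. open U \<and> x \<in> U \<and> smooth_fun_on f U \<and>
        (\<forall>y\<in>U. (f has_derivative (\<lambda>h. g y \<bullet> h)) (at y) \<and> g y \<noteq> 0) \<and>
        K \<inter> U = {y\<in>U. f y \<le> 0})"

definition convex_body :: "'a::euclidean_space set \<Rightarrow> bool" where
  "convex_body K \<longleftrightarrow> compact K \<and> convex K \<and> interior K \<noteq> {}"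

definition supp_plus :: "'a::euclidean_space set \<Rightarrow> 'a \<Rightarrow> real" where
  "supp_plus K \<xi> = (SUP x\<in>K. x \<bullet> \<xi>)"

definition supp_minus :: "'a::euclidean_space set \<Rightarrow> 'a \<Rightarrow> real" where
  "supp_minus K \<xi> = (INF x\<in>K. x \<bullet> \<xi>)"

text \<open>(n-1)-dimensional volume of the hyperplane section K \<inter> {x. x\<bullet>\<xi> = t}:
  rotate \<xi> onto a coordinate axis a by an orthogonal transformation Q, drop the
  a-th coordinate and take Lebesgue measure on the remaining n-1 coordinates.
  (For unit \<xi> this is independent of the choice of Q and a.)\<close>
definition section_area :: "(real^'n) set \<Rightarrow> real^'n \<Rightarrow> real \<Rightarrow> real" where
  "section_area K \<xi> t =
    (let a = (SOME a::'n. True);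
         Q = (SOME Q. orthogonal_transformation Q \<and> Q \<xi> = axis a (1::real))
     in measure (PiM (UNIV - {a}) (\<lambda>_. lborel))
          ((\<lambda>y. restrict (\<lambda>i. y $ i) (UNIV - {a})) ` Q ` (K \<inter> {x. x \<bullet> \<xi> = t})))"

end

theory Submission
  imports Defs
begin


lemma sec_setup:
  fixes \<xi> :: "real^'n"
  assumes "norm \<xi> = 1"
  obtains a :: 'n and Q :: "real^'n \<Rightarrow> real^'n" where "section_area K \<xi> t = measure (PiM (UNIV - {a}) (\<lambda>_. lborel))
          ((\<lambda>y. restrict (\<lambda>i. y $ i) (UNIV - {a})) ` Q ` (K \<inter> {x. x \<bullet> \<xi> = t}))"
    "orthogonal_transformation Q" "Q \<xi> = axis a 1"
proof -
  define a where "a = (SOME a::'n. True)"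
  define Q where "Q = (SOME Q. orthogonal_transformation Q \<and> Q \<xi> = axis a (1::real))"
  have eq: "norm \<xi> = norm (axis a (1::real))" using assms by simp
  obtain Q0 :: "real^'n \<Rightarrow> real^'n" where "orthogonal_transformation Q0" "Q0 \<xi> = axis a 1"
    using orthogonal_transformation_exists[OF eq] by blast
  then have "orthogonal_transformation Q \<and> Q \<xi> = axis a (1::real)"
    unfolding Q_def by (rule someI[where x=Q0, OF conjI])
  then show ?thesis using that[of a Q] unfolding section_area_def Let_def a_def[symmetric] Q_def[symmetric]
    by blast
qed

lemma cube_measure:
  fixes z :: "'n \<Rightarrow> real"
  assumes "0 \<le> r" "finite I"
  shows "emeasure (PiM I (\<lambda>_. lborel)) (PiE I (\<lambda>i. {z i - r .. z i + r})) = ennreal ((2*r)^card I)"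
proof -
  interpret product_sigma_finite "\<lambda>_. lborel" by standard
  have "emeasure (PiM I (\<lambda>_. lborel)) (PiE I (\<lambda>i. {z i - r .. z i + r}))
      = (\<Prod>i\<in>I. emeasure lborel {z i - r .. z i + r})"
    by (rule emeasure_PiM[OF assms(2)]) auto
  also have "\<dots> = (\<Prod>i\<in>I. ennreal (2*r))" using assms by simp
  also have "\<dots> = ennreal ((2*r)^card I)" using assms
    by (simp add: prod_ennreal ennreal_power)
  finally show ?thesis .
qed

lemma sec_bounds:
  fixes K :: "(real^'n) set" and \<xi> c :: "real^'n"
  assumes K: "compact K" and xi: "norm \<xi> = 1" and c: "c \<bullet> \<xi> = t"
  shows "\<lbrakk>0 \<le> \<rho>; \<forall>x\<in>K. x \<bullet> \<xi> = t \<longrightarrow> norm (x - c) \<le> \<rho>\<rbrakk>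
           \<Longrightarrow> section_area K \<xi> t \<le> (2*\<rho>)^(CARD('n)-1)"
    and "\<lbrakk>0 \<le> r; \<forall>y. y \<bullet> \<xi> = 0 \<and> norm y \<le> r \<longrightarrow> c + y \<in> K\<rbrakk>
           \<Longrightarrow> (2*(r/CARD('n)))^(CARD('n)-1) \<le> section_area K \<xi> t"
proof -
  obtain a :: 'n and Q :: "real^'n \<Rightarrow> real^'n" where sa: "section_area K \<xi> t = measure (PiM (UNIV - {a}) (\<lambda>_. lborel))
          ((\<lambda>y. restrict (\<lambda>i. y $ i) (UNIV - {a})) ` Q ` (K \<inter> {x. x \<bullet> \<xi> = t}))"
    and Q: "orthogonal_transformation Q" and Qxi: "Q \<xi> = axis a 1"
    using sec_setup[OF xi] by blast
  define I where "I = (UNIV::'n set) - {a}"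
  define M :: "('n \<Rightarrow> real) measure" where "M = PiM I (\<lambda>_. lborel)"
  define S :: "(real^'n) set" where "S = K \<inter> {x. x \<bullet> \<xi> = t}"
  define pr where "pr = (\<lambda>y::real^'n. restrict (\<lambda>i. y $ i) I)"
  define Y where "Y = pr ` Q ` S"
  have sa': "section_area K \<xi> t = measure M Y"
    using sa unfolding M_def Y_def pr_def I_def S_def .
  have cardI: "card I = CARD('n) - 1" unfolding I_def by (simp add: card_Diff_singleton)
  have finI: "finite I" by simp
  define cube :: "real^'n \<Rightarrow> real \<Rightarrow> ('n \<Rightarrow> real) set" where "cube = (\<lambda>z::real^'n. \<lambda>r::real. PiE I (\<lambda>i. {z$i - r .. z$i + r}))"
  have cube_meas: "emeasure M (cube z r) = ennreal ((2*r)^(CARD('n)-1))" if "0 \<le> r" for z r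
    unfolding M_def cube_def cardI[symmetric] by (rule cube_measure[OF that finI])
  have cube_sets: "cube z r \<in> sets M" for z r
    unfolding M_def cube_def by (rule sets_PiM_I_finite[OF finI]) auto
  have cube_fm: "cube z r \<in> fmeasurable M" if "0 \<le> r" for z r
    using cube_sets cube_meas[OF that] by (auto simp: fmeasurable_def)
  have cube_measure: "measure M (cube z r) = (2*r)^(CARD('n)-1)" if "0 \<le> r" for z r
    using cube_meas[OF that] that by (simp add: measure_def)
  have QQ: "Q x \<bullet> Q y = x \<bullet> y" for x y using Q by (simp add: orthogonal_transformation_def)
  have Qlin: "linear Q" using Q by (simp add: orthogonal_transformation_def)
  have Qnorm: "norm (Q x) = norm x" for x using Q by (simp add: orthogonal_transformation_norm)
  have Qa: "Q x $ a = x \<bullet> \<xi>" for x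
    using QQ[of x \<xi>] by (simp add: Qxi cart_eq_inner_axis)
  define F :: "('n \<Rightarrow> real) \<Rightarrow> real^'n" where "F = (\<lambda>f. \<chi> i. if i = a then t else f i)"
  have Fm: "F \<in> borel_measurable M"
  proof (subst borel_measurable_euclidean_space, intro ballI)
    fix b :: "real^'n" assume "b \<in> Basis"
    then obtain i where b: "b = axis i 1" by (auto simp: Basis_vec_def)
    show "(\<lambda>x. F x \<bullet> b) \<in> borel_measurable M"
    proof (cases "i = a")
      case True then show ?thesis by (simp add: b F_def cart_eq_inner_axis[symmetric])
    next
      case False
      then have "i \<in> I" by (simp add: I_def)
      then have "(\<lambda>x. x i) \<in> borel_measurable M" unfolding M_def by measurable
      then show ?thesis using False by (simp add: b F_def cart_eq_inner_axis[symmetric])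
    qed
  qed
  have compS: "compact S" unfolding S_def
    using closed_hyperplane[of \<xi> t] K by (simp add: inner_commute compact_Int_closed)
  have closedQS: "closed (Q ` S)"
    using Qlin by (intro compact_imp_closed compact_continuous_image compS linear_continuous_on)
      (simp add: linear_conv_bounded_linear)
  have spaceM: "space M = PiE I (\<lambda>_. UNIV)" unfolding M_def by (simp add: space_PiM)
  have Yeq: "Y = F -` (Q ` S) \<inter> space M"
  proof (intro set_eqI iffI)
    fix f assume "f \<in> Y"
    then obtain x where x: "x \<in> S" "f = pr (Q x)" unfolding Y_def by blast
    have xt: "Q x $ a = t" using x(1) Qa[of x] by (simp add: S_def)
    have "F f = Q x" unfolding vec_eq_iff
    proof
      fix i show "F f $ i = Q x $ i"
        using xt by (cases "i = a") (simp_all add: F_def x(2) pr_def I_def)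
    qed
    moreover have "f \<in> space M" unfolding spaceM x(2) pr_def by simp
    ultimately show "f \<in> F -` (Q ` S) \<inter> space M" using x(1) by blast
  next
    fix f assume f: "f \<in> F -` (Q ` S) \<inter> space M"
    then obtain x where x: "x \<in> S" "F f = Q x" by blast
    have fe: "f \<in> extensional I" using f by (simp add: spaceM PiE_def)
    have "pr (F f) = f"
    proof
      fix i show "pr (F f) i = f i"
        using fe by (cases "i \<in> I") (auto simp: pr_def F_def I_def extensional_def)
    qed
    then show "f \<in> Y" using x unfolding Y_def by (metis image_eqI)
  qed
  have Ysets: "Y \<in> sets M" unfolding Yeq
    by (rule measurable_sets[OF Fm]) (simp add: closedQS)
  have Ysub: "Y \<subseteq> cube (Q d) \<rho>" if "\<forall>x\<in>S. norm (x - d) \<le> \<rho>" for \<rho> d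
  proof
    fix f assume "f \<in> Y"
    then obtain x where x: "x \<in> S" "f = pr (Q x)" unfolding Y_def by blast
    have "norm (Q x - Q d) \<le> \<rho>" using that x Qnorm[of "x - d"] linear_diff[OF Qlin] by auto
    then have ci: "\<bar>Q x $ i - Q d $ i\<bar> \<le> \<rho>" for i
      using component_le_norm_cart[of "Q x - Q d" i] by simp
    have "Q x $ i \<in> {Q d $ i - \<rho> .. Q d $ i + \<rho>}" for i
      using ci[of i] by (simp add: abs_le_iff)
    then show "f \<in> cube (Q d) \<rho>" unfolding x(2) cube_def pr_def by simp
  qed
  obtain B where B: "\<forall>x\<in>K. norm x \<le> B" "0 \<le> B"
    using compact_imp_bounded[OF K] by (meson bounded_pos less_imp_le)
  have "\<forall>x\<in>S. norm (x - 0) \<le> B" using B by (auto simp: S_def)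
  then have "Y \<subseteq> cube (Q 0) B" by (rule Ysub)
  then have Yfm: "Y \<in> fmeasurable M" using cube_fm[OF B(2)] Ysets
    by (meson fmeasurableI2)
  show "section_area K \<xi> t \<le> (2*\<rho>)^(CARD('n)-1)"
    if r0: "0 \<le> \<rho>" and hyp: "\<forall>x\<in>K. x \<bullet> \<xi> = t \<longrightarrow> norm (x - c) \<le> \<rho>"
  proof -
    have "Y \<subseteq> cube (Q c) \<rho>" using hyp by (intro Ysub) (auto simp: S_def)
    then have "measure M Y \<le> measure M (cube (Q c) \<rho>)"
      by (intro measure_mono_fmeasurable Ysets cube_fm r0)
    then show ?thesis using sa' cube_measure[OF r0, of "Q c"] by linarith
  qed
  show "(2*(r/CARD('n)))^(CARD('n)-1) \<le> section_area K \<xi> t"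
    if r0: "0 \<le> r" and hyp: "\<forall>y. y \<bullet> \<xi> = 0 \<and> norm y \<le> r \<longrightarrow> c + y \<in> K"
  proof -
    define r' where "r' = r / CARD('n)"
    have r'0: "0 \<le> r'" using r0 by (simp add: r'_def)
    have "cube (Q c) r' \<subseteq> Y"
    proof
      fix f assume f: "f \<in> cube (Q c) r'"
      define w where "w = F f"
      obtain x where wx: "w = Q x" using orthogonal_transformation_surj[OF Q] by (metis surjD)
      define y where "y = x - c"
      have Qy: "Q y = w - Q c" unfolding y_def wx by (simp add: linear_diff[OF Qlin])
      have "y \<bullet> \<xi> = 0"
      proof -
        have "y \<bullet> \<xi> = Q y $ a" by (simp add: Qa)
        also have "\<dots> = 0" using Qy Qa[of c] c by (simp add: w_def F_def)
        finally show ?thesis .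
      qed
      moreover have "norm y \<le> r"
      proof -
        have comp: "\<bar>(w - Q c) $ i\<bar> \<le> r'" for i
        proof (cases "i = a")
          case True then show ?thesis using Qa[of c] c r'0 by (simp add: w_def F_def)
        next
          case False then have "i \<in> I" by (simp add: I_def)
          then have "f i \<in> {Q c $ i - r' .. Q c $ i + r'}"
            using f unfolding cube_def by (rule PiE_mem[rotated])
          then show ?thesis using False by (simp add: w_def F_def abs_le_iff)
        qed
        have "norm y = norm (w - Q c)" using Qy Qnorm[of y] by simp
        also have "\<dots> \<le> (\<Sum>i\<in>UNIV. \<bar>(w - Q c) $ i\<bar>)" by (rule norm_le_l1_cart)
        also have "\<dots> \<le> (\<Sum>i\<in>(UNIV::'n set). r')" by (rule sum_mono) (rule comp)
        also have "\<dots> = r" by (simp add: r'_def)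
        finally show ?thesis .
      qed
      ultimately have "c + y \<in> K" using hyp by blast
      moreover have "(c + y) \<bullet> \<xi> = t" using \<open>y \<bullet> \<xi> = 0\<close> c by (simp add: inner_add_left)
      ultimately have xS: "x \<in> S" by (simp add: S_def y_def)
      have "pr w = f" using f
        by (auto simp: pr_def w_def F_def cube_def I_def PiE_def extensional_def)
      then show "f \<in> Y" unfolding Y_def using xS wx by auto
    qed
    then have "measure M (cube (Q c) r') \<le> measure M Y"
      by (intro measure_mono_fmeasurable cube_sets Yfm)
    moreover have "measure M (cube (Q c) r') = (2*(r/CARD('n)))^(CARD('n)-1)"
      using cube_measure[OF r'0] by (simp only: r'_def)
    ultimately show ?thesis using sa' by linarith
  qed
qed



lemma grad_unique:
  fixes g g' :: "'a::euclidean_space \<Rightarrow> 'a"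
  assumes "(f has_derivative (\<lambda>h. g x \<bullet> h)) (at x)" "(f has_derivative (\<lambda>h. g' x \<bullet> h)) (at x)"
  shows "g x = g' x"
proof -
  have "(\<lambda>h. g x \<bullet> h) = (\<lambda>h. g' x \<bullet> h)" by (rule has_derivative_unique[OF assms])
  then have "g x \<bullet> (g x - g' x) = g' x \<bullet> (g x - g' x)" by metis
  then have "(g x - g' x) \<bullet> (g x - g' x) = 0" by (simp add: inner_diff_left)
  then show ?thesis by simp
qed

lemma taylor_quad:
  fixes f :: "'a::euclidean_space \<Rightarrow> real"
  assumes U: "open U" "p \<in> U" and C2: "Ck_on 2 f U"
    and der: "\<forall>y\<in>U. (f has_derivative (\<lambda>h. g y \<bullet> h)) (at y)"
  shows "\<exists>\<delta>>0. \<exists>L>0. cball p \<delta> \<subseteq> U \<and>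
           (\<forall>x\<in>cball p \<delta>. f x \<le> f p + g p \<bullet> (x - p) + L * (norm (x - p))^2)"
proof -
  obtain g1 where g1: "\<forall>x\<in>U. (f has_derivative (\<lambda>h. g1 x \<bullet> h)) (at x)"
    and g1c: "\<forall>i\<in>Basis. Ck_on 1 (\<lambda>x. g1 x \<bullet> i) U"
  proof -
    have "\<exists>g1. (\<forall>x\<in>U. (f has_derivative (\<lambda>h. g1 x \<bullet> h)) (at x)) \<and>
          (\<forall>i\<in>Basis. Ck_on 1 (\<lambda>x. g1 x \<bullet> i) U)"
      using C2 unfolding numeral_2_eq_2 Ck_on.simps(2) One_nat_def by blast
    then show ?thesis using that by blast
  qed
  have gg1: "g x = g1 x" if "x \<in> U" for x
    using grad_unique[of f g x g1] der g1 that by blast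
  obtain \<delta> where \<delta>: "\<delta> > 0" "cball p \<delta> \<subseteq> U"
    using U open_contains_cball by blast
  have "\<forall>i\<in>Basis. \<exists>B. \<forall>x\<in>cball p \<delta>. \<forall>y\<in>cball p \<delta>.
           \<bar>g x \<bullet> i - g y \<bullet> i\<bar> \<le> B * norm (x - y)"
  proof
    fix i :: 'a assume i: "i \<in> Basis"
    obtain g2 where g2: "\<forall>x\<in>U. ((\<lambda>x. g1 x \<bullet> i) has_derivative (\<lambda>h. g2 x \<bullet> h)) (at x)"
      and g2c: "\<forall>j\<in>Basis. continuous_on U (\<lambda>x. g2 x \<bullet> j)"
    proof -
      have "Ck_on 1 (\<lambda>x. g1 x \<bullet> i) U" using g1c i by blast
      then have "\<exists>g2. (\<forall>x\<in>U. ((\<lambda>x. g1 x \<bullet> i) has_derivative (\<lambda>h. g2 x \<bullet> h)) (at x)) \<and>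
          (\<forall>j\<in>Basis. continuous_on U (\<lambda>x. g2 x \<bullet> j))"
        unfolding One_nat_def Ck_on.simps by blast
      then show ?thesis using that by blast
    qed
    have "continuous_on U g2" using g2c continuous_on_componentwise[of U g2] by blast
    then have "continuous_on (cball p \<delta>) g2" using \<delta>(2) by (rule continuous_on_subset)
    then have "bounded (g2 ` cball p \<delta>)" by (intro compact_imp_bounded compact_continuous_image) auto
    then obtain B where B: "\<forall>x\<in>cball p \<delta>. norm (g2 x) \<le> B" by (auto simp: bounded_iff)
    have "\<bar>g1 x \<bullet> i - g1 y \<bullet> i\<bar> \<le> B * norm (x - y)" if "x \<in> cball p \<delta>" "y \<in> cball p \<delta>" for x y
    proof -
      have "norm ((\<lambda>x. g1 x \<bullet> i) x - (\<lambda>x. g1 x \<bullet> i) y) \<le> B * norm (x - y)"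
      proof (rule differentiable_bound[where f' = "\<lambda>x h. g2 x \<bullet> h"])
        show "convex (cball p \<delta>)" by simp
        show "((\<lambda>x. g1 x \<bullet> i) has_derivative (\<lambda>h. g2 x \<bullet> h)) (at x within cball p \<delta>)"
          if "x \<in> cball p \<delta>" for x
        proof -
          have "x \<in> U" using that \<delta>(2) by blast
          then show ?thesis using g2 by (blast intro: has_derivative_at_withinI)
        qed
        show "onorm (\<lambda>h. g2 x \<bullet> h) \<le> B" if "x \<in> cball p \<delta>" for x
        proof (rule onorm_le)
          fix h
          have "norm (g2 x \<bullet> h) \<le> norm (g2 x) * norm h"
            by (simp add: Cauchy_Schwarz_ineq2)
          also have "\<dots> \<le> B * norm h" using B that by (simp add: mult_right_mono)
          finally show "norm (g2 x \<bullet> h) \<le> B * norm h" .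
        qed
      qed (use that in auto)
      then show ?thesis by simp
    qed
    then show "\<exists>B. \<forall>x\<in>cball p \<delta>. \<forall>y\<in>cball p \<delta>. \<bar>g x \<bullet> i - g y \<bullet> i\<bar> \<le> B * norm (x - y)"
      using gg1 \<delta>(2) by (metis subsetD)
  qed
  then obtain Bf where Bf: "\<forall>i\<in>Basis. \<forall>x\<in>cball p \<delta>. \<forall>y\<in>cball p \<delta>.
           \<bar>g x \<bullet> i - g y \<bullet> i\<bar> \<le> Bf i * norm (x - y)"
    by metis
  define L where "L = (\<Sum>i\<in>Basis. \<bar>Bf i\<bar>) + 1"
  have L0: "L > 0" unfolding L_def by (simp add: add_nonneg_pos sum_nonneg)
  have glip: "norm (g x - g p) \<le> L * norm (x - p)" if "x \<in> cball p \<delta>" for x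
  proof -
    have "norm (g x - g p) \<le> (\<Sum>i\<in>Basis. \<bar>(g x - g p) \<bullet> i\<bar>)" by (rule norm_le_l1)
    also have "\<dots> \<le> (\<Sum>i\<in>Basis. \<bar>Bf i\<bar> * norm (x - p))"
    proof (rule sum_mono)
      fix i :: 'a assume "i \<in> Basis"
      then have "\<bar>g x \<bullet> i - g p \<bullet> i\<bar> \<le> Bf i * norm (x - p)" using Bf that \<delta>(1) by auto
      also have "\<dots> \<le> \<bar>Bf i\<bar> * norm (x - p)" by (simp add: mult_right_mono)
      finally show "\<bar>(g x - g p) \<bullet> i\<bar> \<le> \<bar>Bf i\<bar> * norm (x - p)" by (simp add: inner_diff_left)
    qed
    also have "\<dots> = (\<Sum>i\<in>Basis. \<bar>Bf i\<bar>) * norm (x - p)" by (simp add: sum_distrib_right)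
    also have "\<dots> \<le> L * norm (x - p)" unfolding L_def by (simp add: mult_right_mono)
    finally show ?thesis .
  qed
  have quad: "f x \<le> f p + g p \<bullet> (x - p) + L * (norm (x - p))^2" if x: "x \<in> cball p \<delta>" for x
  proof -
    define r where "r = norm (x - p)"
    have sub: "cball p r \<subseteq> cball p \<delta>" using x by (auto simp: r_def dist_norm norm_minus_commute)
    have "norm (f x - f p - g p \<bullet> (x - p)) \<le> norm (x - p) * (L * r)"
    proof (rule differentiable_bound_linearization[where S = "cball p r" and f' = "\<lambda>x h. g x \<bullet> h"])
      show "p + t *\<^sub>R (x - p) \<in> cball p r" if "t \<in> {0..1}" for t
        using that by (auto simp: r_def dist_norm mult_left_le_one_le)
      show "(f has_derivative (\<lambda>h. g y \<bullet> h)) (at y within cball p r)" if "y \<in> cball p r" for y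
      proof -
        have "y \<in> U" using that sub \<delta>(2) by blast
        then show ?thesis using der by (blast intro: has_derivative_at_withinI)
      qed
      show "onorm ((\<lambda>h. g y \<bullet> h) - (\<lambda>h. g p \<bullet> h)) \<le> L * r" if y: "y \<in> cball p r" for y
      proof (rule onorm_le)
        fix h
        have "norm (((\<lambda>h. g y \<bullet> h) - (\<lambda>h. g p \<bullet> h)) h) = \<bar>(g y - g p) \<bullet> h\<bar>"
          by (simp add: inner_diff_left)
        also have "\<dots> \<le> norm (g y - g p) * norm h" by (rule Cauchy_Schwarz_ineq2)
        also have "\<dots> \<le> (L * r) * norm h"
        proof (rule mult_right_mono)
          have "norm (g y - g p) \<le> L * norm (y - p)" using glip sub y by blast
          also have "\<dots> \<le> L * r" using y L0 by (auto simp: dist_norm norm_minus_commute)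
          finally show "norm (g y - g p) \<le> L * r" .
        qed simp
        finally show "norm (((\<lambda>h. g y \<bullet> h) - (\<lambda>h. g p \<bullet> h)) h) \<le> L * r * norm h" .
      qed
    qed (simp add: r_def)
    then have "f x - f p - g p \<bullet> (x - p) \<le> L * (norm (x - p))^2"
      by (simp add: r_def power2_eq_square algebra_simps)
    then show ?thesis by simp
  qed
  show ?thesis using \<delta> L0 quad by blast
qed

lemma sq_decomp:
  fixes y \<eta> :: "'a::real_inner"
  assumes "\<eta> \<bullet> \<eta> = 1" "y \<bullet> \<eta> = 0"
  shows "(y + a *\<^sub>R \<eta>) \<bullet> (y + a *\<^sub>R \<eta>) = y \<bullet> y + a^2"
  using assms by (simp add: inner_add_left inner_add_right inner_commute power2_eq_square)

lemma sq_expand: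
  fixes v \<eta> :: "'a::real_inner"
  assumes "\<eta> \<bullet> \<eta> = 1"
  shows "(v + a *\<^sub>R \<eta>) \<bullet> (v + a *\<^sub>R \<eta>) = v \<bullet> v + 2 * a * (v \<bullet> \<eta>) + a^2"
  using assms by (simp add: inner_add_left inner_add_right inner_commute power2_eq_square)

lemma geo_upper:
  fixes K :: "'a::euclidean_space set"
  assumes eta: "norm \<eta> = 1" and ball: "K \<subseteq> cball (p - R *\<^sub>R \<eta>) R"
    and x: "x \<in> K" and xs: "(x - p) \<bullet> \<eta> = - s"
  shows "norm (x - (p - s *\<^sub>R \<eta>)) \<le> sqrt (2 * R * s)"
proof -
  have ee: "\<eta> \<bullet> \<eta> = 1" using eta by (simp add: power2_norm_eq_inner[symmetric])
  define y where "y = x - (p - s *\<^sub>R \<eta>)"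
  have y0: "y \<bullet> \<eta> = 0" using xs ee by (simp add: y_def inner_diff_left inner_add_left algebra_simps)
  have "norm (x - (p - R *\<^sub>R \<eta>)) \<le> R" using ball x by (auto simp: dist_norm norm_minus_commute)
  moreover have "x - (p - R *\<^sub>R \<eta>) = y + (R - s) *\<^sub>R \<eta>" by (simp add: y_def algebra_simps)
  ultimately have "norm (y + (R - s) *\<^sub>R \<eta>) \<le> R" by simp
  then have "(norm (y + (R - s) *\<^sub>R \<eta>))^2 \<le> R^2" by (simp add: power_mono)
  then have "y \<bullet> y + (R - s)^2 \<le> R^2"
    using sq_decomp[OF ee y0, of "R - s"] by (simp add: power2_norm_eq_inner)
  then have "(norm y)^2 + s^2 \<le> 2 * R * s"
    by (simp add: power2_norm_eq_inner[symmetric] power2_eq_square algebra_simps)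
  then have "(norm y)^2 \<le> 2 * R * s" using zero_le_power2[of s] by linarith
  then show ?thesis unfolding y_def[symmetric] by (rule real_le_rsqrt)
qed

lemma geo_halfspace:
  fixes K :: "'a::euclidean_space set"
  assumes eta: "norm \<eta> = 1" and ball: "K \<subseteq> cball (p - R *\<^sub>R \<eta>) R" and R: "R > 0"
    and x: "x \<in> K"
  shows "(x - p) \<bullet> \<eta> \<le> 0"
proof -
  have ee: "\<eta> \<bullet> \<eta> = 1" using eta by (simp add: power2_norm_eq_inner[symmetric])
  have "norm ((x - p) + R *\<^sub>R \<eta>) \<le> R" using ball x by (auto simp: dist_norm norm_minus_commute algebra_simps)
  then have "(norm ((x - p) + R *\<^sub>R \<eta>))^2 \<le> R^2" by (simp add: power_mono)
  then have "((x - p) + R *\<^sub>R \<eta>) \<bullet> ((x - p) + R *\<^sub>R \<eta>) \<le> R^2"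
    by (simp only: power2_norm_eq_inner)
  then have "(x - p) \<bullet> (x - p) + 2 * R * ((x - p) \<bullet> \<eta>) + R^2 \<le> R^2"
    using sq_expand[OF ee, of "x - p" R] by simp
  moreover have "(x - p) \<bullet> (x - p) \<ge> 0" by simp
  ultimately have "R * ((x - p) \<bullet> \<eta>) \<le> 0" by linarith
  then show ?thesis using R by (simp add: mult_le_0_iff)
qed

lemma geo_inner:
  fixes K :: "'a::euclidean_space set"
  assumes smooth: "smooth_boundary K" and eta: "norm \<eta> = 1" and pK: "p \<in> K" and R: "R > 0"
    and ball: "K \<subseteq> cball (p - R *\<^sub>R \<eta>) R"
  shows "\<exists>s0>0. \<exists>\<kappa>>0. \<forall>s. 0 < s \<and> s < s0 \<longrightarrow>
            (\<forall>y. y \<bullet> \<eta> = 0 \<and> norm y \<le> sqrt (\<kappa> * s) \<longrightarrow> p - s *\<^sub>R \<eta> + y \<in> K)"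
proof -
  have ee: "\<eta> \<bullet> \<eta> = 1" using eta by (simp add: power2_norm_eq_inner[symmetric])
  have half: "(x - p) \<bullet> \<eta> \<le> 0" if "x \<in> K" for x using geo_halfspace[OF eta ball R that] .
  have pfr: "p \<in> frontier K"
  proof -
    have "p \<notin> interior K"
    proof
      assume "p \<in> interior K"
      then obtain e where e: "e > 0" "ball p e \<subseteq> K" by (auto simp: mem_interior)
      have "p + (e/2) *\<^sub>R \<eta> \<in> ball p e" using e eta by (simp add: dist_norm)
      then have "p + (e/2) *\<^sub>R \<eta> \<in> K" using e by blast
      from half[OF this] have "(e/2) * (\<eta> \<bullet> \<eta>) \<le> 0" by simp
      then show False using ee e by simp
    qed
    then show ?thesis using pK closure_subset by (auto simp: frontier_def)
  qed
  obtain U f g where U: "open U" "p \<in> U" and sm: "smooth_fun_on f U"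
    and der: "\<forall>y\<in>U. (f has_derivative (\<lambda>h. g y \<bullet> h)) (at y) \<and> g y \<noteq> 0"
    and KU: "K \<inter> U = {y\<in>U. f y \<le> 0}"
    using smooth pfr unfolding smooth_boundary_def by blast
  have C2: "Ck_on 2 f U" using sm by (simp add: smooth_fun_on_def)
  obtain \<delta> L where \<delta>: "\<delta> > 0" "L > 0" "cball p \<delta> \<subseteq> U"
    and quad: "\<forall>x\<in>cball p \<delta>. f x \<le> f p + g p \<bullet> (x - p) + L * (norm (x - p))^2"
    using taylor_quad[OF U C2] der by blast
  have fp: "f p \<le> 0" using KU pK U(2) by blast
  define G where "G = g p"
  have G0: "G \<noteq> 0" using der U(2) by (simp add: G_def)
  have inK: "x \<in> K" if "x \<in> cball p \<delta>" "G \<bullet> (x - p) + L * (norm (x - p))^2 \<le> 0" for x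
  proof -
    have "f x \<le> 0" using quad that fp by (force simp: G_def)
    moreover have "x \<in> U" using that \<delta>(3) by blast
    ultimately show ?thesis using KU by blast
  qed
  have neg: "v \<bullet> \<eta> \<le> 0" if v: "G \<bullet> v < 0" for v
  proof -
    have v0: "v \<noteq> 0" using v by auto
    then have nv: "norm v > 0" by simp
    define \<epsilon> where "\<epsilon> = min (\<delta> / norm v) ((- (G \<bullet> v)) / (L * (norm v)^2))"
    have "(- (G \<bullet> v)) / (L * (norm v)^2) > 0" using \<delta>(2) nv v by (intro divide_pos_pos) auto
    then have \<epsilon>0: "\<epsilon> > 0" using \<delta> nv by (simp add: \<epsilon>_def)
    have e1: "\<epsilon> * norm v \<le> \<delta>" using nv by (simp add: \<epsilon>_def min_def field_simps split: if_splits)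
    have e2: "\<epsilon> * (L * (norm v)^2) \<le> - (G \<bullet> v)"
      using nv \<delta>(2) by (simp add: \<epsilon>_def min_def field_simps split: if_splits)
    have "p + \<epsilon> *\<^sub>R v \<in> cball p \<delta>" using e1 \<epsilon>0 by (simp add: dist_norm)
    moreover have "G \<bullet> ((p + \<epsilon> *\<^sub>R v) - p) + L * (norm ((p + \<epsilon> *\<^sub>R v) - p))^2 \<le> 0"
    proof -
      have "G \<bullet> ((p + \<epsilon> *\<^sub>R v) - p) + L * (norm ((p + \<epsilon> *\<^sub>R v) - p))^2
            = \<epsilon> * (G \<bullet> v + \<epsilon> * (L * (norm v)^2))"
        using \<epsilon>0 by (simp add: power2_eq_square algebra_simps)
      also have "\<dots> \<le> \<epsilon> * 0" using e2 \<epsilon>0 by (intro mult_left_mono) auto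
      finally show ?thesis by simp
    qed
    ultimately have "p + \<epsilon> *\<^sub>R v \<in> K" by (rule inK)
    from half[OF this] have "\<epsilon> * (v \<bullet> \<eta>) \<le> 0" by simp
    then show ?thesis using \<epsilon>0 by (simp add: mult_le_0_iff)
  qed
  define lam where "lam = G \<bullet> \<eta>"
  have Geq: "G = lam *\<^sub>R \<eta>"
  proof (rule ccontr)
    assume ne: "G \<noteq> lam *\<^sub>R \<eta>"
    define w where "w = G - lam *\<^sub>R \<eta>"
    have w0: "w \<noteq> 0" using ne by (simp add: w_def)
    have we: "w \<bullet> \<eta> = 0" using ee by (simp add: w_def lam_def inner_diff_left)
    have Gw: "G \<bullet> w = w \<bullet> w"
    proof -
      have "G = w + lam *\<^sub>R \<eta>" by (simp add: w_def)
      then have "G \<bullet> w = (w + lam *\<^sub>R \<eta>) \<bullet> w" by simp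
      also have "\<dots> = w \<bullet> w" using we by (simp add: inner_add_left inner_add_right inner_commute)
      finally show ?thesis .
    qed
    have ww: "w \<bullet> w > 0" using w0 by simp
    define d where "d = (w \<bullet> w) / (2 * (\<bar>lam\<bar> + 1))"
    have d0: "d > 0" using ww by (simp add: d_def)
    have "d * lam \<le> d * \<bar>lam\<bar>" using d0 by (simp add: mult_left_mono)
    also have "\<dots> \<le> (w \<bullet> w) / 2"
      using ww by (simp add: d_def field_simps)
    finally have dl: "d * lam \<le> (w \<bullet> w) / 2" .
    define v where "v = d *\<^sub>R \<eta> - w"
    have "G \<bullet> v = d * lam - w \<bullet> w" by (simp add: v_def inner_diff_right Gw lam_def inner_commute)
    then have "G \<bullet> v < 0" using dl ww by linarith
    then have "v \<bullet> \<eta> \<le> 0" by (rule neg)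
    moreover have "v \<bullet> \<eta> = d" using ee we by (simp add: v_def inner_diff_left)
    ultimately show False using d0 by simp
  qed
  have lam0: "lam > 0"
  proof (rule ccontr)
    assume "\<not> lam > 0"
    moreover have "lam \<noteq> 0" using G0 Geq by auto
    ultimately have "G \<bullet> \<eta> < 0" by (simp add: lam_def)
    then have "\<eta> \<bullet> \<eta> \<le> 0" by (rule neg)
    then show False using ee by simp
  qed
  define \<kappa> where "\<kappa> = lam / (4 * L)"
  have \<kappa>0: "\<kappa> > 0" using lam0 \<delta>(2) by (simp add: \<kappa>_def)
  define s0 where "s0 = min 1 (min (\<delta>^2 / (1 + \<kappa>)) (lam / (2 * L)))"
  have s00: "s0 > 0" using \<delta> lam0 \<kappa>0 by (simp add: s0_def)
  have main: "p - s *\<^sub>R \<eta> + y \<in> K"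
    if s: "0 < s" "s < s0" and y: "y \<bullet> \<eta> = 0" "norm y \<le> sqrt (\<kappa> * s)" for s y
  proof -
    have s1: "s < 1" and s2: "s < \<delta>^2 / (1 + \<kappa>)" and s3: "s < lam / (2 * L)"
      using s by (simp_all add: s0_def)
    have yy: "y \<bullet> y \<le> \<kappa> * s"
    proof -
      have "(norm y)^2 \<le> (sqrt (\<kappa> * s))^2" using y(2) by (simp add: power_mono)
      also have "\<dots> = \<kappa> * s" using \<kappa>0 s by simp
      finally show ?thesis by (simp add: power2_norm_eq_inner)
    qed
    define x where "x = p - s *\<^sub>R \<eta> + y"
    have xp: "x - p = y + (- s) *\<^sub>R \<eta>" by (simp add: x_def)
    have nx: "(norm (x - p))^2 = y \<bullet> y + s^2"
      unfolding power2_norm_eq_inner xp using sq_decomp[OF ee y(1), of "- s"] by simp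
    have "s^2 \<le> s" using s s1 by (simp add: power2_eq_square mult_left_le_one_le)
    then have "(norm (x - p))^2 \<le> (1 + \<kappa>) * s" using nx yy by (simp add: algebra_simps)
    also have "\<dots> < \<delta>^2" using s2 \<kappa>0 by (simp add: field_simps)
    finally have "norm (x - p) < \<delta>" using \<delta>(1) by (simp add: power_less_imp_less_base)
    then have xb: "x \<in> cball p \<delta>" by (simp add: dist_norm norm_minus_commute)
    have "G \<bullet> (x - p) = - (lam * s)" using ee y(1) by (simp add: Geq xp inner_add_right inner_diff_right inner_commute)
    moreover have "L * s^2 \<le> lam * s / 2"
    proof -
      have "L * s \<le> lam / 2" using s3 \<delta>(2) by (simp add: field_simps)
      then have "(L * s) * s \<le> (lam / 2) * s" using s by (simp add: mult_right_mono)
      then show ?thesis by (simp add: power2_eq_square algebra_simps)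
    qed
    moreover have "L * (y \<bullet> y) \<le> lam * s / 4"
    proof -
      have "L * (y \<bullet> y) \<le> L * (\<kappa> * s)" using yy \<delta>(2) by (simp add: mult_left_mono)
      also have "\<dots> = lam * s / 4" using \<delta>(2) by (simp add: \<kappa>_def field_simps)
      finally show ?thesis .
    qed
    moreover have "L * (norm (x - p))^2 = L * (y \<bullet> y) + L * s^2" by (simp add: nx distrib_left)
    ultimately have "G \<bullet> (x - p) + L * (norm (x - p))^2 \<le> 0"
      using mult_pos_pos[OF lam0 s(1)] by linarith
    then show ?thesis using inK[OF xb] by (simp add: x_def)
  qed
  show ?thesis using s00 \<kappa>0 main by blast
qed



lemma poly_not_halfpower:
  fixes Pp :: "real poly"
  assumes N: "odd N" and c1: "c1 > 0"
    and ev: "eventually (\<lambda>s. c1 * sqrt s ^ N \<le> \<bar>poly Pp s\<bar> \<and> \<bar>poly Pp s\<bar> \<le> c2 * sqrt s ^ N) (at_right 0)"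
  shows False
proof -
  have ntriv: "\<not> trivial_limit (at_right (0::real))" by simp
  have pos: "eventually (\<lambda>s::real. s > 0) (at_right 0)" by (simp add: eventually_at_right_less)
  have ev2: "eventually (\<lambda>s. c1^2 * s^N \<le> (poly Pp s)^2 \<and> (poly Pp s)^2 \<le> c2^2 * s^N \<and> s > 0) (at_right 0)"
    using ev pos
  proof eventually_elim
    case (elim s)
    have "(sqrt s ^ N)^2 = (sqrt s ^ 2)^N" by (metis power_mult mult.commute)
    then have sq: "(sqrt s ^ N)^2 = s^N" using elim(2) by simp
    have a0: "0 \<le> c1 * sqrt s ^ N" using c1 elim(2) by simp
    have "(c1 * sqrt s ^ N)^2 \<le> (\<bar>poly Pp s\<bar>)^2" using a0 elim(1) by (intro power_mono) auto
    moreover have "(\<bar>poly Pp s\<bar>)^2 \<le> (c2 * sqrt s ^ N)^2" using a0 elim(1) by (intro power_mono) auto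
    ultimately show ?case using sq elim(2) by (simp add: power_mult_distrib)
  qed
  have "Pp \<noteq> 0"
  proof
    assume "Pp = 0"
    have "eventually (\<lambda>s::real. False) (at_right 0)"
    proof (rule eventually_mono[OF ev2])
      fix s :: real assume h: "c1^2 * s^N \<le> (poly Pp s)^2 \<and> (poly Pp s)^2 \<le> c2^2 * s^N \<and> s > 0"
      have "c1^2 * s^N > 0" using c1 h by simp
      then show False using h \<open>Pp = 0\<close> by simp
    qed
    then show False using ntriv by (simp add: trivial_limit_def)
  qed
  then obtain R where R: "Pp = [:- 0, 1:] ^ order 0 Pp * R" "\<not> [:- 0, 1:] dvd R"
    using order_decomp by blast
  define m where "m = order 0 Pp"
  have R0: "poly R 0 \<noteq> 0" using R(2) by (simp add: poly_eq_0_iff_dvd)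
  have Pps: "poly Pp s = s^m * poly R s" for s
    by (subst R(1)) (simp add: m_def poly_monom)
  have limR: "((\<lambda>s. (poly R s)^2) \<longlongrightarrow> (poly R 0)^2) (at_right 0)"
    by (intro tendsto_intros)
  show False
  proof (cases "2 * m < N")
    case True
    define k where "k = N - 2 * m"
    have k: "N = 2 * m + k" "k > 0" using True by (simp_all add: k_def)
    have "eventually (\<lambda>s. (poly R s)^2 \<le> c2^2 * s^k) (at_right 0)"
      using ev2
    proof eventually_elim
      case (elim s)
      have "s^(2*m) * (poly R s)^2 \<le> s^(2*m) * (c2^2 * s^k)"
        using elim by (simp add: Pps k(1) power_add power_mult_distrib power_mult algebra_simps)
      then show ?case using elim by (simp add: mult_le_cancel_left_pos)
    qed
    moreover have "((\<lambda>s. c2^2 * s^k) \<longlongrightarrow> c2^2 * 0^k) (at_right 0)"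
      by (intro tendsto_intros)
    ultimately have "(poly R 0)^2 \<le> c2^2 * 0^k"
      by (intro tendsto_le[OF ntriv _ limR]) auto
    moreover have "(poly R 0)^2 > 0" using R0 by simp
    ultimately show False using k(2) by (simp add: zero_power)
  next
    case False
    then have "2 * m \<noteq> N" "2 * m \<ge> N" using N by auto
    define k where "k = 2 * m - N"
    have k: "2 * m = N + k" "k > 0" using \<open>2 * m \<noteq> N\<close> \<open>2 * m \<ge> N\<close> by (simp_all add: k_def)
    have "eventually (\<lambda>s. c1^2 \<le> s^k * (poly R s)^2) (at_right 0)"
      using ev2
    proof eventually_elim
      case (elim s)
      have "(poly Pp s)^2 = s^(2*m) * (poly R s)^2" by (simp add: Pps power_mult_distrib power_mult mult.commute)
      moreover have "s^(2*m) = s^N * s^k" by (simp add: k(1) power_add)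
      ultimately have "s^N * c1^2 \<le> s^N * (s^k * (poly R s)^2)"
        using elim by (simp add: mult.assoc mult.commute)
      then show ?case using elim by (simp add: mult_le_cancel_left_pos)
    qed
    moreover have "((\<lambda>s. s^k * (poly R s)^2) \<longlongrightarrow> 0^k * (poly R 0)^2) (at_right 0)"
      by (intro tendsto_intros)
    ultimately have "c1^2 \<le> 0^k * (poly R 0)^2"
      by (intro tendsto_le[OF ntriv]) auto
    then show False using c1 k(2) by (simp add: zero_power)
  qed
qed



lemma supp_plus_ge:
  fixes K :: "'a::euclidean_space set"
  assumes "compact K" "x \<in> K"
  shows "x \<bullet> \<xi> \<le> supp_plus K \<xi>"
proof -
  obtain B where B: "\<forall>x\<in>K. norm x \<le> B" using compact_imp_bounded[OF assms(1)] bounded_iff by blast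
  have "bdd_above ((\<lambda>x. x \<bullet> \<xi>) ` K)"
  proof (rule bdd_aboveI2)
    fix x assume "x \<in> K"
    then show "x \<bullet> \<xi> \<le> B * norm \<xi>"
      using B Cauchy_Schwarz_ineq2[of x \<xi>] by (metis abs_le_D1 mult_right_mono norm_ge_zero order_trans)
  qed
  then show ?thesis unfolding supp_plus_def using assms(2) by (rule cSUP_upper2) simp
qed

lemma supp_minus_le:
  fixes K :: "'a::euclidean_space set"
  assumes "compact K" "x \<in> K"
  shows "supp_minus K \<xi> \<le> x \<bullet> \<xi>"
proof -
  obtain B where B: "\<forall>x\<in>K. norm x \<le> B" using compact_imp_bounded[OF assms(1)] bounded_iff by blast
  have "bdd_below ((\<lambda>x. x \<bullet> \<xi>) ` K)"
  proof (rule bdd_belowI2)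
    fix x assume "x \<in> K"
    then show "- (B * norm \<xi>) \<le> x \<bullet> \<xi>"
      using B Cauchy_Schwarz_ineq2[of x \<xi>]
      by (smt (verit, best) mult_right_mono norm_ge_zero)
  qed
  then show ?thesis unfolding supp_minus_def using assms(2) by (rule cINF_lower2) simp
qed

lemma supp_plus_eq:
  fixes K :: "'a::euclidean_space set"
  assumes "p \<in> K" "\<forall>x\<in>K. x \<bullet> \<xi> \<le> p \<bullet> \<xi>"
  shows "supp_plus K \<xi> = p \<bullet> \<xi>"
  unfolding supp_plus_def using assms by (intro cSup_eq_maximum) auto

lemma supp_minus_eq:
  fixes K :: "'a::euclidean_space set"
  assumes "p \<in> K" "\<forall>x\<in>K. p \<bullet> \<xi> \<le> x \<bullet> \<xi>"
  shows "supp_minus K \<xi> = p \<bullet> \<xi>"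
  unfolding supp_minus_def using assms by (intro cInf_eq_minimum) auto

lemma supp_plus_lip:
  fixes K :: "'a::euclidean_space set"
  assumes K: "compact K" "K \<noteq> {}" and B: "\<forall>x\<in>K. norm x \<le> B"
  shows "supp_plus K \<xi> \<le> supp_plus K \<zeta> + B * norm (\<xi> - \<zeta>)"
  unfolding supp_plus_def[of K \<xi>]
proof (rule cSUP_least[OF K(2)])
  fix x assume x: "x \<in> K"
  have "x \<bullet> \<xi> = x \<bullet> \<zeta> + x \<bullet> (\<xi> - \<zeta>)" by (simp add: inner_diff_right)
  also have "x \<bullet> (\<xi> - \<zeta>) \<le> B * norm (\<xi> - \<zeta>)"
    using B x Cauchy_Schwarz_ineq2[of x "\<xi> - \<zeta>"]
    by (metis abs_le_D1 mult_right_mono norm_ge_zero order_trans)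
  moreover have "x \<bullet> \<zeta> \<le> supp_plus K \<zeta>" by (rule supp_plus_ge[OF K(1) x])
  ultimately show "x \<bullet> \<xi> \<le> supp_plus K \<zeta> + B * norm (\<xi> - \<zeta>)" by linarith
qed

lemma supp_minus_lip:
  fixes K :: "'a::euclidean_space set"
  assumes K: "compact K" "K \<noteq> {}" and B: "\<forall>x\<in>K. norm x \<le> B"
  shows "supp_minus K \<zeta> - B * norm (\<xi> - \<zeta>) \<le> supp_minus K \<xi>"
  unfolding supp_minus_def[of K \<xi>]
proof (rule cINF_greatest[OF K(2)])
  fix x assume x: "x \<in> K"
  have "x \<bullet> \<xi> = x \<bullet> \<zeta> + x \<bullet> (\<xi> - \<zeta>)" by (simp add: inner_diff_right)
  moreover have "- (B * norm (\<xi> - \<zeta>)) \<le> x \<bullet> (\<xi> - \<zeta>)"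
    using B x Cauchy_Schwarz_ineq2[of x "\<xi> - \<zeta>"]
    by (smt (verit, best) mult_right_mono norm_ge_zero)
  moreover have "supp_minus K \<zeta> \<le> x \<bullet> \<zeta>" by (rule supp_minus_le[OF K(1) x])
  ultimately show "supp_minus K \<zeta> - B * norm (\<xi> - \<zeta>) \<le> x \<bullet> \<xi>" by linarith
qed

lemma supp_cont:
  fixes K :: "'a::euclidean_space set"
  assumes K: "compact K" "K \<noteq> {}"
  shows "continuous_on S (supp_plus K)" "continuous_on S (supp_minus K)"
proof -
  obtain B where B: "\<forall>x\<in>K. norm x \<le> B" "B > 0"
    using compact_imp_bounded[OF K(1)] bounded_pos by blast
  have "lipschitz_on B S (supp_plus K)"
  proof (rule lipschitz_onI)
    fix x y assume "x \<in> S" "y \<in> S"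
    have "supp_plus K x \<le> supp_plus K y + B * norm (x - y)" by (rule supp_plus_lip[OF K B(1)])
    moreover have "supp_plus K y \<le> supp_plus K x + B * norm (y - x)" by (rule supp_plus_lip[OF K B(1)])
    ultimately show "dist (supp_plus K x) (supp_plus K y) \<le> B * dist x y"
      by (simp add: dist_norm norm_minus_commute abs_le_iff)
  qed (use B in simp)
  then show "continuous_on S (supp_plus K)" by (rule lipschitz_on_continuous_on)
  have "lipschitz_on B S (supp_minus K)"
  proof (rule lipschitz_onI)
    fix x y assume "x \<in> S" "y \<in> S"
    have "supp_minus K y - B * norm (x - y) \<le> supp_minus K x" by (rule supp_minus_lip[OF K B(1)])
    moreover have "supp_minus K x - B * norm (y - x) \<le> supp_minus K y" by (rule supp_minus_lip[OF K B(1)])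
    ultimately show "dist (supp_minus K x) (supp_minus K y) \<le> B * dist x y"
      by (simp add: dist_norm norm_minus_commute abs_le_iff)
  qed (use B in simp)
  then show "continuous_on S (supp_minus K)" by (rule lipschitz_on_continuous_on)
qed

lemma supp_lt:
  fixes K :: "'a::euclidean_space set"
  assumes K: "compact K" "interior K \<noteq> {}" and xi: "norm \<xi> = 1"
  shows "supp_minus K \<xi> < supp_plus K \<xi>"
proof -
  obtain x where "x \<in> interior K" using K(2) by blast
  then obtain e where e: "e > 0" "ball x e \<subseteq> K" by (auto simp: mem_interior)
  have "x + (e/2) *\<^sub>R \<xi> \<in> K" "x - (e/2) *\<^sub>R \<xi> \<in> K"
    using e xi by (auto intro!: subsetD[OF e(2)] simp: dist_norm)
  from supp_plus_ge[OF K(1) this(1)] supp_minus_le[OF K(1) this(2)]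
  have "(x + (e/2) *\<^sub>R \<xi>) \<bullet> \<xi> \<le> supp_plus K \<xi>" "supp_minus K \<xi> \<le> (x - (e/2) *\<^sub>R \<xi>) \<bullet> \<xi>" .
  moreover have "\<xi> \<bullet> \<xi> = 1" using xi by (simp add: power2_norm_eq_inner[symmetric])
  ultimately show ?thesis using e(1) by (simp add: inner_add_left inner_diff_left)
qed

lemma density:
  fixes K :: "'a::euclidean_space set"
  assumes K: "compact K" "K \<noteq> {}" and xi0: "norm \<xi>0 = 1" and eps: "\<epsilon> > 0"
  shows "\<exists>\<xi> p R. norm \<xi> = 1 \<and> dist \<xi> \<xi>0 < \<epsilon> \<and> p \<in> K \<and> R > 0 \<and> K \<subseteq> cball (p - R *\<^sub>R \<xi>) R"
proof -
  obtain M where M: "\<forall>x\<in>K. norm x \<le> M" "M > 0"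
    using compact_imp_bounded[OF K(1)] bounded_pos by blast
  define L where "L = M + 1 + 4 * M / \<epsilon>"
  define x0 where "x0 = - (L *\<^sub>R \<xi>0)"
  have cont: "continuous_on K (\<lambda>x. norm (x - x0))" by (intro continuous_intros)
  obtain p where p: "p \<in> K" "\<forall>x\<in>K. norm (x - x0) \<le> norm (p - x0)"
    using compact_attains_sup[OF compact_continuous_image[OF cont K(1)]] K(2) by auto
  define R where "R = norm (p - x0)"
  have pM: "norm p \<le> M" using M p by blast
  have pL: "p - x0 = p + L *\<^sub>R \<xi>0" by (simp add: x0_def)
  have nL: "norm (L *\<^sub>R \<xi>0) = L" using xi0 M(2) eps by (simp add: L_def)
  have R1: "R \<ge> L - M"
  proof -
    have "L = norm ((p + L *\<^sub>R \<xi>0) - p)" using nL by simp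
    also have "\<dots> \<le> norm (p + L *\<^sub>R \<xi>0) + norm p" by (rule norm_triangle_ineq4)
    finally show ?thesis using pM unfolding R_def pL by linarith
  qed
  have R2: "R \<le> L + M"
  proof -
    have "R \<le> norm p + norm (L *\<^sub>R \<xi>0)" unfolding R_def pL by (rule norm_triangle_ineq)
    then show ?thesis using nL pM by simp
  qed
  have LM: "L - M > 2 * M / \<epsilon>" using eps M(2) by (simp add: L_def field_simps)
  have LM0: "L - M > 0" using LM eps M(2) by (smt (verit) divide_pos_pos)
  have R0: "R > 0" using R1 LM0 by simp
  define \<xi> where "\<xi> = (1 / R) *\<^sub>R (p - x0)"
  have nxi: "norm \<xi> = 1" using R0 by (simp add: \<xi>_def R_def)
  have x0eq: "p - R *\<^sub>R \<xi> = x0" using R0 by (simp add: \<xi>_def)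
  have ball: "K \<subseteq> cball (p - R *\<^sub>R \<xi>) R"
    unfolding x0eq using p(2) by (auto simp: R_def dist_norm norm_minus_commute)
  have "\<xi> - \<xi>0 = (1 / R) *\<^sub>R (p + (L - R) *\<^sub>R \<xi>0)"
    using R0 by (simp add: \<xi>_def pL algebra_simps)
  then have "norm (\<xi> - \<xi>0) = norm (p + (L - R) *\<^sub>R \<xi>0) / R" using R0 by simp
  also have "\<dots> \<le> (M + M) / R"
  proof (rule divide_right_mono)
    have "norm (p + (L - R) *\<^sub>R \<xi>0) \<le> norm p + \<bar>L - R\<bar>"
      using norm_triangle_ineq[of p "(L - R) *\<^sub>R \<xi>0"] xi0 by simp
    also have "\<dots> \<le> M + M" using pM R1 R2 by simp
    finally show "norm (p + (L - R) *\<^sub>R \<xi>0) \<le> M + M" .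
  qed (use R0 in simp)
  also have "\<dots> \<le> 2 * M / (L - M)" using R1 LM0 M(2) by (simp add: frac_le)
  also have "\<dots> < \<epsilon>" using LM LM0 eps by (simp add: field_simps)
  finally have "dist \<xi> \<xi>0 < \<epsilon>" by (simp add: dist_norm)
  then show ?thesis using nxi p(1) R0 ball by blast
qed

lemma zero_by_density:
  fixes \<phi> :: "'a::metric_space \<Rightarrow> real"
  assumes cont: "continuous_on S \<phi>"
    and dense: "\<And>\<xi> \<epsilon>. \<xi> \<in> S \<Longrightarrow> \<epsilon> > 0 \<Longrightarrow> \<exists>\<zeta>\<in>S. dist \<zeta> \<xi> < \<epsilon> \<and> \<phi> \<zeta> = 0"
    and xi: "\<xi> \<in> S"
  shows "\<phi> \<xi> = 0"
proof (rule ccontr)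
  assume ne: "\<phi> \<xi> \<noteq> 0"
  then obtain d where d: "d > 0" "\<forall>x'\<in>S. dist x' \<xi> < d \<longrightarrow> dist (\<phi> x') (\<phi> \<xi>) < \<bar>\<phi> \<xi>\<bar>"
    using cont xi unfolding continuous_on_iff by (meson zero_less_abs_iff)
  obtain \<zeta> where z: "\<zeta> \<in> S" "dist \<zeta> \<xi> < d" "\<phi> \<zeta> = 0" using dense[OF xi d(1)] by blast
  have "dist (\<phi> \<zeta>) (\<phi> \<xi>) < \<bar>\<phi> \<xi>\<bar>" using d(2) z(1,2) by blast
  then show False using z(3) by (simp add: dist_real_def)
qed

lemma quad_roots:
  fixes q :: "real poly"
  assumes deg: "degree q = 2" and ra: "poly q a = 0" and rb: "poly q b = 0" and ab: "b < a"
  shows "poly q t = (- coeff q 2) * (a - t) * (t - b)"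
proof -
  have pq: "poly q x = coeff q 0 + coeff q 1 * x + coeff q 2 * x^2" for x
    by (simp add: poly_altdef deg numeral_2_eq_2 atMost_Suc)
  define c0 c1 c2 where "c0 = coeff q 0" "c1 = coeff q 1" "c2 = coeff q 2"
  have ea: "c0 + c1 * a + c2 * a^2 = 0" using ra pq c0_c1_c2_def by simp
  have eb: "c0 + c1 * b + c2 * b^2 = 0" using rb pq c0_c1_c2_def by simp
  have "(a - b) * (c1 + c2 * (a + b)) = 0"
    using ea eb by (simp add: power2_eq_square algebra_simps)
  then have c1: "c1 = - c2 * (a + b)" using ab by simp
  have c0: "c0 = c2 * a * b" using ea c1 by (simp add: power2_eq_square algebra_simps)
  show ?thesis using pq[of t] c0 c1 unfolding c0_c1_c2_def[symmetric]
    by (simp add: power2_eq_square algebra_simps)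
qed

lemma asym_contra:
  assumes N: "odd N" and c1: "c1 > 0" and d1: "d1 > 0"
    and ev: "eventually (\<lambda>s. c1 * sqrt s ^ N \<le> A s \<and> A s \<le> c2 * sqrt s ^ N \<and> d1 \<le> Q s \<and> Q s \<le> d2
              \<and> (A s = sqrt (Q s) * poly Pp s \<or> A s = poly Pp s / sqrt (Q s))) (at_right 0)"
  shows False
proof -
  have pos: "eventually (\<lambda>s::real. s > 0) (at_right 0)" by (simp add: eventually_at_right_less)
  define e1 where "e1 = c1 * min (1 / sqrt d2) (sqrt d1)"
  define e2 where "e2 = \<bar>c2\<bar> * (1 / sqrt d1 + sqrt d2)"
  have "eventually (\<lambda>s. e1 * sqrt s ^ N \<le> \<bar>poly Pp s\<bar> \<and> \<bar>poly Pp s\<bar> \<le> e2 * sqrt s ^ N) (at_right 0)"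
    using ev pos
  proof eventually_elim
    case (elim s)
    define x where "x = sqrt s ^ N"
    have x0: "x > 0" using elim by (simp add: x_def)
    have Q0: "Q s > 0" using elim d1 by linarith
    have d2: "d2 \<ge> d1" using elim by linarith
    have sQ: "sqrt d1 \<le> sqrt (Q s)" "sqrt (Q s) \<le> sqrt d2" using elim by auto
    have sQ0: "sqrt (Q s) > 0" "sqrt d1 > 0" "sqrt d2 > 0" using Q0 d1 d2 by auto
    have A1: "c1 * x \<le> A s" "A s \<le> c2 * x" using elim by (simp_all add: x_def)
    have A0: "A s > 0" using A1 c1 x0 by (smt (verit) mult_pos_pos)
    have c2a: "c2 * x \<le> \<bar>c2\<bar> * x" using x0 by (simp add: mult_right_mono)
    have m1: "min (1 / sqrt d2) (sqrt d1) \<ge> 0" using sQ0 by simp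
    from elim have "A s = sqrt (Q s) * poly Pp s \<or> A s = poly Pp s / sqrt (Q s)" by blast
    then show ?case
    proof
      assume h: "A s = sqrt (Q s) * poly Pp s"
      have "poly Pp s > 0" using A0 h sQ0 by (simp add: zero_less_mult_iff)
      then have P: "\<bar>poly Pp s\<bar> = A s / sqrt (Q s)" using sQ0 h by simp
      have lo: "e1 * x \<le> A s / sqrt (Q s)"
      proof -
        have "e1 * x = (c1 * x) * min (1 / sqrt d2) (sqrt d1)" by (simp add: e1_def)
        also have "\<dots> \<le> c1 * x * (1 / sqrt d2)" using c1 x0 by (intro mult_left_mono) auto
        also have "\<dots> \<le> A s * (1 / sqrt (Q s))"
          using A1 A0 sQ sQ0 c1 x0 by (intro mult_mono) (auto simp: frac_le)
        finally show ?thesis by simp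
      qed
      have hi: "A s / sqrt (Q s) \<le> e2 * x"
      proof -
        have "A s / sqrt (Q s) \<le> (\<bar>c2\<bar> * x) / sqrt d1"
          using A1 c2a sQ sQ0 A0 by (intro frac_le) auto
        also have "\<dots> \<le> e2 * x" using sQ0 x0 by (simp add: e2_def field_simps)
        finally show ?thesis .
      qed
      show ?thesis using lo hi P by (simp add: x_def)
    next
      assume h: "A s = poly Pp s / sqrt (Q s)"
      have "poly Pp s > 0" using A0 h sQ0 by (simp add: zero_less_divide_iff)
      then have P: "\<bar>poly Pp s\<bar> = A s * sqrt (Q s)" using sQ0 h by simp
      have lo: "e1 * x \<le> A s * sqrt (Q s)"
      proof -
        have "e1 * x = (c1 * x) * min (1 / sqrt d2) (sqrt d1)" by (simp add: e1_def)
        also have "\<dots> \<le> c1 * x * sqrt d1" using c1 x0 by (intro mult_left_mono) auto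
        also have "\<dots> \<le> A s * sqrt (Q s)"
          using A1 A0 sQ sQ0 c1 x0 by (intro mult_mono) auto
        finally show ?thesis .
      qed
      have hi: "A s * sqrt (Q s) \<le> e2 * x"
      proof -
        have "A s * sqrt (Q s) \<le> (\<bar>c2\<bar> * x) * sqrt d2"
          using A1 c2a sQ sQ0 A0 by (intro mult_mono) auto
        also have "\<dots> \<le> e2 * x" using sQ0 x0 by (simp add: e2_def field_simps)
        finally show ?thesis .
      qed
      show ?thesis using lo hi P by (simp add: x_def)
    qed
  qed
  moreover have "e1 > 0"
  proof -
    have "eventually (\<lambda>s. d1 \<le> d2) (at_right (0::real))"
      using ev by (rule eventually_mono) linarith
    then have "d1 \<le> d2" by (simp add: eventually_const_iff)
    then show ?thesis using c1 d1 by (simp add: e1_def)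
  qed
  ultimately show False using poly_not_halfpower[OF N] by blast
qed



lemma endpoint_zero:
  fixes K :: "(real^'n) set" and P q :: "real^'n \<Rightarrow> real poly" and \<xi> p :: "real^'n"
  assumes odd: "odd (CARD('n) - 1)" and K: "compact K" and smooth: "smooth_boundary K"
    and xi: "norm \<xi> = 1" and sg: "\<sigma> = 1 \<or> \<sigma> = -1"
    and pK: "p \<in> K" and R: "R > 0" and ball: "K \<subseteq> cball (p - R *\<^sub>R (\<sigma> *\<^sub>R \<xi>)) R"
    and qpos: "\<forall>t\<in>{supp_minus K \<xi> <..< supp_plus K \<xi>}. poly (q \<xi>) t > 0"
    and Af: "(\<forall>t\<in>{supp_minus K \<xi> <..< supp_plus K \<xi>}.
               section_area K \<xi> t = sqrt (poly (q \<xi>) t) * poly (P \<xi>) t)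
          \<or> (\<forall>t\<in>{supp_minus K \<xi> <..< supp_plus K \<xi>}.
               section_area K \<xi> t = poly (P \<xi>) t / sqrt (poly (q \<xi>) t))"
  shows "poly (q \<xi>) (p \<bullet> \<xi>) = 0"
proof (rule ccontr)
  assume qh0: "poly (q \<xi>) (p \<bullet> \<xi>) \<noteq> 0"
  define \<eta> where "\<eta> = \<sigma> *\<^sub>R \<xi>"
  have s2: "\<sigma> * \<sigma> = 1" using sg by auto
  have eta: "norm \<eta> = 1" using sg xi by (auto simp: \<eta>_def)
  have ee: "\<xi> \<bullet> \<xi> = 1" using xi by (simp add: power2_norm_eq_inner[symmetric])
  define h where "h = p \<bullet> \<xi>"
  define n where "n = CARD('n)"
  define N where "N = n - 1"
  have n0: "real n > 0" by (simp add: n_def)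
  have ball': "K \<subseteq> cball (p - R *\<^sub>R \<eta>) R" using ball by (simp add: \<eta>_def)
  obtain s0 \<kappa> where s0: "s0 > 0" and \<kappa>: "\<kappa> > 0"
    and inner: "\<forall>s. 0 < s \<and> s < s0 \<longrightarrow>
            (\<forall>y. y \<bullet> \<eta> = 0 \<and> norm y \<le> sqrt (\<kappa> * s) \<longrightarrow> p - s *\<^sub>R \<eta> + y \<in> K)"
    using geo_inner[OF smooth eta pK R ball'] by blast
  define t where "t = (\<lambda>s. h - \<sigma> * s)"
  have ct: "(p - s *\<^sub>R \<eta>) \<bullet> \<xi> = t s" for s
    using ee by (simp add: \<eta>_def t_def h_def inner_diff_left)
  have yeta: "y \<bullet> \<eta> = 0 \<longleftrightarrow> y \<bullet> \<xi> = 0" for y using sg by (auto simp: \<eta>_def)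
  have in_int: "t s \<in> {supp_minus K \<xi> <..< supp_plus K \<xi>}" if s: "0 < s" "s < s0 / 2" for s
  proof -
    have "0 < 2 * s \<and> 2 * s < s0" using s by simp
    moreover have "(0::real^'n) \<bullet> \<eta> = 0 \<and> norm (0::real^'n) \<le> sqrt (\<kappa> * (2 * s))" using \<kappa> s by simp
    ultimately have "p - (2 * s) *\<^sub>R \<eta> + 0 \<in> K" using inner by blast
    then have q2: "p - (2 * s) *\<^sub>R \<eta> \<in> K" by simp
    have a1: "supp_minus K \<xi> \<le> h" "h \<le> supp_plus K \<xi>"
      using supp_minus_le[OF K pK] supp_plus_ge[OF K pK] by (simp_all add: h_def)
    have a2: "supp_minus K \<xi> \<le> t (2 * s)" "t (2 * s) \<le> supp_plus K \<xi>"
      using supp_minus_le[OF K q2, of \<xi>] supp_plus_ge[OF K q2, of \<xi>] ct[of "2 * s"] by simp_all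
    show ?thesis using sg a1 a2 s by (auto simp: t_def)
  qed
  define c1 where "c1 = (2 * (sqrt \<kappa> / n)) ^ N"
  define c2 where "c2 = (2 * sqrt (2 * R)) ^ N"
  have c1pos: "c1 > 0" using \<kappa> n0 by (simp add: c1_def)
  have bounds: "c1 * sqrt s ^ N \<le> section_area K \<xi> (t s) \<and> section_area K \<xi> (t s) \<le> c2 * sqrt s ^ N"
    if s: "0 < s" "s < s0" for s
  proof
    have "(2 * (sqrt (\<kappa> * s) / CARD('n))) ^ (CARD('n) - 1) \<le> section_area K \<xi> (t s)"
    proof (rule sec_bounds(2)[OF K xi ct])
      show "0 \<le> sqrt (\<kappa> * s)" using \<kappa> s by simp
      show "\<forall>y. y \<bullet> \<xi> = 0 \<and> norm y \<le> sqrt (\<kappa> * s) \<longrightarrow> p - s *\<^sub>R \<eta> + y \<in> K"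
        using inner s yeta by blast
    qed
    moreover have "(2 * (sqrt (\<kappa> * s) / CARD('n))) ^ (CARD('n) - 1) = c1 * sqrt s ^ N"
    proof -
      have "2 * (sqrt (\<kappa> * s) / CARD('n)) = (2 * (sqrt \<kappa> / n)) * sqrt s"
        by (simp add: real_sqrt_mult n_def)
      then show ?thesis unfolding c1_def N_def n_def by (simp only: power_mult_distrib)
    qed
    ultimately show "c1 * sqrt s ^ N \<le> section_area K \<xi> (t s)" by simp
    have "section_area K \<xi> (t s) \<le> (2 * sqrt (2 * R * s)) ^ (CARD('n) - 1)"
    proof (rule sec_bounds(1)[OF K xi ct])
      show "0 \<le> sqrt (2 * R * s)" using R s by simp
      show "\<forall>x\<in>K. x \<bullet> \<xi> = t s \<longrightarrow> norm (x - (p - s *\<^sub>R \<eta>)) \<le> sqrt (2 * R * s)"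
      proof (intro ballI impI)
        fix x assume x: "x \<in> K" "x \<bullet> \<xi> = t s"
        have "(x - p) \<bullet> \<eta> = \<sigma> * (x \<bullet> \<xi> - h)" by (simp add: \<eta>_def h_def inner_diff_left)
        also have "\<dots> = - s"
        proof -
          have "x \<bullet> \<xi> - h = - (\<sigma> * s)" using x(2) by (simp add: t_def)
          then have "\<sigma> * (x \<bullet> \<xi> - h) = - ((\<sigma> * \<sigma>) * s)" by simp
          then show ?thesis using s2 by simp
        qed
        finally show "norm (x - (p - s *\<^sub>R \<eta>)) \<le> sqrt (2 * R * s)"
          by (rule geo_upper[OF eta ball' x(1)])
      qed
    qed
    moreover have "(2 * sqrt (2 * R * s)) ^ (CARD('n) - 1) = c2 * sqrt s ^ N"
    proof -
      have "2 * sqrt (2 * R * s) = (2 * sqrt (2 * R)) * sqrt s"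
        by (simp add: real_sqrt_mult)
      then show ?thesis unfolding c2_def N_def n_def by (simp only: power_mult_distrib)
    qed
    ultimately show "section_area K \<xi> (t s) \<le> c2 * sqrt s ^ N" by simp
  qed
  define qh where "qh = poly (q \<xi>) h"
  have limQ: "((\<lambda>s. poly (q \<xi>) (t s)) \<longlongrightarrow> qh) (at_right 0)"
  proof -
    have "((\<lambda>s. poly (q \<xi>) (h - \<sigma> * s)) \<longlongrightarrow> poly (q \<xi>) (h - \<sigma> * 0)) (at_right 0)"
      by (intro tendsto_intros)
    then show ?thesis by (simp add: t_def qh_def)
  qed
  have evs: "eventually (\<lambda>s. s \<in> {0 <..< s0 / 2}) (at_right (0::real))"
    using s0 by (intro eventually_at_right_real) simp
  have "eventually (\<lambda>s. 0 \<le> poly (q \<xi>) (t s)) (at_right 0)"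
    using evs by (rule eventually_mono) (use qpos in_int in \<open>auto intro: less_imp_le\<close>)
  then have "0 \<le> qh" by (intro tendsto_lowerbound[OF limQ]) auto
  then have qhpos: "qh > 0" using qh0 by (simp add: qh_def h_def)
  have ev1: "eventually (\<lambda>s. qh / 2 < poly (q \<xi>) (t s)) (at_right 0)"
    using limQ qhpos by (intro order_tendstoD(1)) auto
  have ev2: "eventually (\<lambda>s. poly (q \<xi>) (t s) < 2 * qh) (at_right 0)"
    using limQ qhpos by (intro order_tendstoD(2)) auto
  define Pp where "Pp = pcompose (P \<xi>) [:h, - \<sigma>:]"
  have Pps: "poly Pp s = poly (P \<xi>) (t s)" for s by (simp add: Pp_def poly_pcompose t_def mult.commute)
  have oddN: "odd N" using odd by (simp add: N_def n_def)
  show False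
  proof (rule asym_contra[of N c1 "qh / 2" "\<lambda>s. section_area K \<xi> (t s)" c2
        "\<lambda>s. poly (q \<xi>) (t s)" "2 * qh" Pp, OF oddN c1pos])
    show "qh / 2 > 0" using qhpos by simp
    show "eventually (\<lambda>s. c1 * sqrt s ^ N \<le> section_area K \<xi> (t s) \<and> section_area K \<xi> (t s) \<le> c2 * sqrt s ^ N \<and>
        qh / 2 \<le> poly (q \<xi>) (t s) \<and> poly (q \<xi>) (t s) \<le> 2 * qh \<and>
        (section_area K \<xi> (t s) = sqrt (poly (q \<xi>) (t s)) * poly Pp s \<or>
         section_area K \<xi> (t s) = poly Pp s / sqrt (poly (q \<xi>) (t s)))) (at_right 0)"
      using evs ev1 ev2
    proof eventually_elim
      case (elim s)
      then have s: "0 < s" "s < s0" "s < s0 / 2" by auto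
      have "t s \<in> {supp_minus K \<xi> <..< supp_plus K \<xi>}" using in_int s by blast
      then have "section_area K \<xi> (t s) = sqrt (poly (q \<xi>) (t s)) * poly Pp s \<or>
         section_area K \<xi> (t s) = poly Pp s / sqrt (poly (q \<xi>) (t s))"
        using Af unfolding Pps by blast
      then show ?case using bounds[OF s(1,2)] elim by auto
    qed
  qed
qed



theorem lemma2p2:
  fixes K :: "(real^'n) set"
    and P q :: "real^'n \<Rightarrow> real poly"
  assumes n2: "CARD('n) \<ge> 2" and n_even: "even CARD('n)"
    and body: "convex_body K"
    and smooth: "smooth_boundary K"
    and P_cont: "\<And>k. continuous_on (sphere 0 1) (\<lambda>\<xi>. coeff (P \<xi>) k)"
    and q_cont: "\<And>k. continuous_on (sphere 0 1) (\<lambda>\<xi>. coeff (q \<xi>) k)"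
    and q_deg: "\<And>\<xi>. \<xi> \<in> sphere 0 1 \<Longrightarrow> degree (q \<xi>) = 2"
    and q_pos: "\<And>\<xi> t. \<xi> \<in> sphere 0 1 \<Longrightarrow> t \<in> {supp_minus K \<xi> <..< supp_plus K \<xi>}
                  \<Longrightarrow> poly (q \<xi>) t > 0"
    and A_form:
      "(\<forall>\<xi>\<in>sphere 0 1. \<forall>t\<in>{supp_minus K \<xi> <..< supp_plus K \<xi>}.
          section_area K \<xi> t = sqrt (poly (q \<xi>) t) * poly (P \<xi>) t)
       \<or> (\<forall>\<xi>\<in>sphere 0 1. \<forall>t\<in>{supp_minus K \<xi> <..< supp_plus K \<xi>}.
          section_area K \<xi> t = poly (P \<xi>) t / sqrt (poly (q \<xi>) t))"
  shows "\<exists>q0 :: real^'n \<Rightarrow> real. \<forall>\<xi>\<in>sphere 0 1. \<forall>t.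
           poly (q \<xi>) t = q0 \<xi> * (supp_plus K \<xi> - t) * (t - supp_minus K \<xi>)"
proof -
  have K: "compact K" and intK: "interior K \<noteq> {}" using body by (auto simp: convex_body_def)
  have Kne: "K \<noteq> {}" using intK interior_subset by blast
  have odd: "odd (CARD('n) - 1)" using n2 n_even by simp
  have endpt: "poly (q \<xi>) (p \<bullet> \<xi>) = 0"
    if xi: "norm \<xi> = 1" and sg: "\<sigma> = 1 \<or> \<sigma> = -1" and pK: "p \<in> K" and R: "R > 0"
      and ball: "K \<subseteq> cball (p - R *\<^sub>R (\<sigma> *\<^sub>R \<xi>)) R" for \<xi> p R \<sigma>
  proof (rule endpoint_zero[OF odd K smooth xi sg pK R ball])
    have xs: "\<xi> \<in> sphere 0 1" using xi by simp
    show "\<forall>t\<in>{supp_minus K \<xi><..<supp_plus K \<xi>}. 0 < poly (q \<xi>) t" using q_pos[OF xs] by blast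
    show "(\<forall>t\<in>{supp_minus K \<xi><..<supp_plus K \<xi>}. section_area K \<xi> t = sqrt (poly (q \<xi>) t) * poly (P \<xi>) t) \<or>
      (\<forall>t\<in>{supp_minus K \<xi><..<supp_plus K \<xi>}. section_area K \<xi> t = poly (P \<xi>) t / sqrt (poly (q \<xi>) t))"
      using A_form xs by blast
  qed
  have polyeq: "poly (q \<xi>) x = (\<Sum>i\<le>2. coeff (q \<xi>) i * x ^ i)" if "\<xi> \<in> sphere 0 1" for \<xi> x
    using q_deg[OF that] by (simp add: poly_altdef)
  have contp: "continuous_on (sphere 0 1) (\<lambda>\<xi>. poly (q \<xi>) (f \<xi>))"
    if f: "continuous_on (sphere 0 1) f" for f :: "real^'n \<Rightarrow> real"
  proof -
    have "continuous_on (sphere 0 1) (\<lambda>\<xi>. \<Sum>i\<le>2. coeff (q \<xi>) i * f \<xi> ^ i)"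
      by (intro continuous_intros q_cont f)
    then show ?thesis by (rule continuous_on_cong[THEN iffD1, rotated 2]) (simp_all add: polyeq)
  qed
  have zplus: "poly (q \<xi>) (supp_plus K \<xi>) = 0" if xs: "\<xi> \<in> sphere 0 1" for \<xi>
  proof (rule zero_by_density[where S = "sphere 0 1" and \<phi> = "\<lambda>\<xi>. poly (q \<xi>) (supp_plus K \<xi>)"])
    show "continuous_on (sphere 0 1) (\<lambda>\<xi>. poly (q \<xi>) (supp_plus K \<xi>))"
      by (rule contp) (rule supp_cont(1)[OF K Kne])
    show "\<xi> \<in> sphere 0 1" by (rule xs)
    fix \<xi>0 :: "real^'n" and \<epsilon> :: real assume x0: "\<xi>0 \<in> sphere 0 1" and e: "\<epsilon> > 0"
    obtain \<zeta> p R where z: "norm \<zeta> = 1" "dist \<zeta> \<xi>0 < \<epsilon>" "p \<in> K" "R > 0"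
        "K \<subseteq> cball (p - R *\<^sub>R \<zeta>) R"
      using density[OF K Kne _ e, of \<xi>0] x0 by auto
    have "poly (q \<zeta>) (p \<bullet> \<zeta>) = 0" using endpt[OF z(1) _ z(3) z(4), of 1] z(5) by simp
    moreover have "supp_plus K \<zeta> = p \<bullet> \<zeta>"
    proof (rule supp_plus_eq[OF z(3)])
      show "\<forall>x\<in>K. x \<bullet> \<zeta> \<le> p \<bullet> \<zeta>"
        using geo_halfspace[OF z(1) z(5) z(4)] by (simp add: inner_diff_left)
    qed
    ultimately show "\<exists>\<zeta>\<in>sphere 0 1. dist \<zeta> \<xi>0 < \<epsilon> \<and> poly (q \<zeta>) (supp_plus K \<zeta>) = 0"
      using z by auto
  qed
  have zminus: "poly (q \<xi>) (supp_minus K \<xi>) = 0" if xs: "\<xi> \<in> sphere 0 1" for \<xi>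
  proof (rule zero_by_density[where S = "sphere 0 1" and \<phi> = "\<lambda>\<xi>. poly (q \<xi>) (supp_minus K \<xi>)"])
    show "continuous_on (sphere 0 1) (\<lambda>\<xi>. poly (q \<xi>) (supp_minus K \<xi>))"
      by (rule contp) (rule supp_cont(2)[OF K Kne])
    show "\<xi> \<in> sphere 0 1" by (rule xs)
    fix \<xi>0 :: "real^'n" and \<epsilon> :: real assume x0: "\<xi>0 \<in> sphere 0 1" and e: "\<epsilon> > 0"
    obtain \<zeta>' p R where z: "norm \<zeta>' = 1" "dist \<zeta>' (- \<xi>0) < \<epsilon>" "p \<in> K" "R > 0"
        "K \<subseteq> cball (p - R *\<^sub>R \<zeta>') R"
      using density[OF K Kne _ e, of "- \<xi>0"] x0 by auto
    define \<zeta> where "\<zeta> = - \<zeta>'"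
    have nz: "norm \<zeta> = 1" using z(1) by (simp add: \<zeta>_def)
    have bz: "K \<subseteq> cball (p - R *\<^sub>R ((-1) *\<^sub>R \<zeta>)) R" using z(5) by (simp add: \<zeta>_def)
    have "poly (q \<zeta>) (p \<bullet> \<zeta>) = 0" using endpt[OF nz _ z(3) z(4) bz] by simp
    moreover have "supp_minus K \<zeta> = p \<bullet> \<zeta>"
    proof (rule supp_minus_eq[OF z(3)])
      show "\<forall>x\<in>K. p \<bullet> \<zeta> \<le> x \<bullet> \<zeta>"
        using geo_halfspace[OF z(1) z(5) z(4)] by (simp add: \<zeta>_def inner_diff_left)
    qed
    moreover have "dist \<zeta> \<xi>0 < \<epsilon>"
    proof -
      have "\<zeta> - \<xi>0 = - (\<zeta>' - (- \<xi>0))" by (simp add: \<zeta>_def)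
      then have "dist \<zeta> \<xi>0 = dist \<zeta>' (- \<xi>0)" by (simp only: dist_norm norm_minus_cancel)
      then show ?thesis using z(2) by simp
    qed
    ultimately show "\<exists>\<zeta>\<in>sphere 0 1. dist \<zeta> \<xi>0 < \<epsilon> \<and> poly (q \<zeta>) (supp_minus K \<zeta>) = 0"
      using nz by auto
  qed
  show ?thesis
  proof (intro exI[of _ "\<lambda>\<xi>. - coeff (q \<xi>) 2"] ballI allI)
    fix \<xi> :: "real^'n" and t assume xs: "\<xi> \<in> sphere 0 1"
    have lt: "supp_minus K \<xi> < supp_plus K \<xi>" using supp_lt[OF K intK] xs by simp
    show "poly (q \<xi>) t = - coeff (q \<xi>) 2 * (supp_plus K \<xi> - t) * (t - supp_minus K \<xi>)"
      by (rule quad_roots[OF q_deg[OF xs] zplus[OF xs] zminus[OF xs] lt])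
  qed
qed

end
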